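(* Let $\theta_n>0$ and let $L_{n-1},L_n\ge 1$ be integers. Let $z^l$ be a real tensor and let $z^l_1,\dots,z^l_{L_{n-1}}$ be tensors of the same shape with $\sum_{i=1}^{L_{n-1}} z^l_i=z^l$. Let $X$ be the tensor obtained by stacking them, $X[i]=z^l_i$ for $i\in\{1,\dots,L_{n-1}\}$, and let $\widetilde h(X)$ be the output of the PASC integrate-and-fire procedure (described in the context) with threshold parameter $\theta_n$, input quantization step $L_{n-1}$ and output quantization step $L_n$. Then (a) $\displaystyle \widehat h(z^l):=\theta_n\,\mathrm{clip}\!\left(\frac{1}{L_n}\left\lfloor \frac{z^l L_n}{\theta_n}+\frac12\right\rfloor,0,1\right)=\sum_{j=1}^{L_n}\widetilde h(X)[j]$ (elementwise), and (b) every entry of every $\widetilde h(X)[j]$, $j\in\{1,\dots,L_n\}$, lies in the set $\{0,\theta_n/L_n\}$.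
   Context: $\widehat h$ is the Quantization-Clip-Floor-Shift (QCFS) activation with quantization step $L_n$ and (trained) threshold $\lambda^l=\theta_n$; $\mathrm{clip}(y,0,1)=\min(\max(y,0),1)$ and all operations are elementwise. $H$ denotes the Heaviside step function, $H(y)=1$ if $y\ge 0$ and $H(y)=0$ otherwise. The PASC integrate-and-fire procedure $\widetilde h$ acts independently on each entry; for a single entry, with input values $X[1],\dots,X[L_{n-1}]$, it is as follows. Set $\theta^*=\theta_n/L_n$, membrane potential $m=\theta^*/2$, spike count $s=0$. Stage 1: for $t=1,\dots,L_{n-1}$: set $m\leftarrow m+X[t]$; if $m\ge\theta^*$ then $s\leftarrow s+\theta^*$ and $m\leftarrow m-\theta^*$. Stage 2 (no input; starting from the $m$ and $s$ left by Stage 1): for $t=1,\dots,\max(L_{n-1},L_n)-1$: if $m\ge\theta^*$ then $s\leftarrow s+\theta^*$, $m\leftarrow m-\theta^*$ (excitatory spike); else if $m<0$ then $s\leftarrow s-\theta^*$, $m\leftarrow m+\theta^*$ (inhibitory spike); otherwise nothing. Stage 3: set $\mathrm{mem}(0)=s$; for $t=1,\dots,L_n$: output $\widetilde h(X)[t]=H(\mathrm{mem}(t-1)-\theta^* )\cdot\theta^*$ and set $\mathrm{mem}(t)=\mathrm{mem}(t-1)-\widetilde h(X)[t]$. The output $\widetilde h(X)$ is the stack of the $L_n$ values $\widetilde h(X)[1],\dots,\widetilde h(X)[L_n]$. *)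

theory Defs
  imports Complex_Main
begin

text \<open>Tensors are modelled as functions from an arbitrary index type 'e to real;
  all operations act entrywise. A stacked tensor is a function nat \<Rightarrow> 'e \<Rightarrow> real,
  indexed by time steps 1, 2, ...\<close>

definition heaviside :: "real \<Rightarrow> real" where
  "heaviside y = (if y \<ge> 0 then 1 else 0)"

definition clip01 :: "real \<Rightarrow> real" where
  "clip01 y = min (max y 0) 1"

definition qcfs :: "real \<Rightarrow> nat \<Rightarrow> real \<Rightarrow> real" where
  "qcfs th L z = th * clip01 (of_int \<lfloor>z * real L / th + 1/2\<rfloor> / real L)"

text \<open>Stage 1: one integrate-and-fire step; state is (membrane m, spike count s).\<close>
definition pasc_step1 :: "real \<Rightarrow> real \<times> real \<Rightarrow> real \<Rightarrow> real \<times> real" where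
  "pasc_step1 ths st x =
     (let m = fst st + x; s = snd st in
      if m \<ge> ths then (m - ths, s + ths) else (m, s))"

definition pasc_stage1 :: "real \<Rightarrow> nat \<Rightarrow> (nat \<Rightarrow> real) \<Rightarrow> real \<times> real" where
  "pasc_stage1 ths Lp X = foldl (pasc_step1 ths) (ths / 2, 0) (map X [1..<Lp + 1])"

definition pasc_step2 :: "real \<Rightarrow> real \<times> real \<Rightarrow> real \<times> real" where
  "pasc_step2 ths st =
     (let m = fst st; s = snd st in
      if m \<ge> ths then (m - ths, s + ths)
      else if m < 0 then (m + ths, s - ths)
      else (m, s))"

definition pasc_stage2 :: "real \<Rightarrow> nat \<Rightarrow> nat \<Rightarrow> (nat \<Rightarrow> real) \<Rightarrow> real \<times> real" where
  "pasc_stage2 ths Lp Ln X = (pasc_step2 ths ^^ (max Lp Ln - 1)) (pasc_stage1 ths Lp X)"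

primrec pasc_mem :: "real \<Rightarrow> real \<Rightarrow> nat \<Rightarrow> real" where
  "pasc_mem ths s 0 = s"
| "pasc_mem ths s (Suc t) = pasc_mem ths s t - heaviside (pasc_mem ths s t - ths) * ths"

text \<open>Output of PASC for one entry at time t (meaningful for 1 \<le> t \<le> Ln),
  with threshold parameter th, input step Lp and output step Ln.\<close>
definition pasc_entry :: "real \<Rightarrow> nat \<Rightarrow> nat \<Rightarrow> (nat \<Rightarrow> real) \<Rightarrow> nat \<Rightarrow> real" where
  "pasc_entry th Lp Ln X t =
     (let ths = th / real Ln;
          s = snd (pasc_stage2 ths Lp Ln X)
      in heaviside (pasc_mem ths s (t - 1) - ths) * ths)"

definition pasc :: "real \<Rightarrow> nat \<Rightarrow> nat \<Rightarrow> (nat \<Rightarrow> 'e \<Rightarrow> real) \<Rightarrow> nat \<Rightarrow> 'e \<Rightarrow> real" where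
  "pasc th Lp Ln X t e = pasc_entry th Lp Ln (\<lambda>i. X i e) t"

end

theory Submission
  imports Defs
begin

lemma stage1_inv:
  fixes ths :: real
  assumes "ths > 0"
  shows "\<exists>k::int. snd (foldl (pasc_step1 ths) (ths/2, 0) xs) = of_int k * ths
     \<and> fst (foldl (pasc_step1 ths) (ths/2, 0) xs) + snd (foldl (pasc_step1 ths) (ths/2, 0) xs)
        = ths/2 + sum_list xs
     \<and> 0 \<le> k \<and> k \<le> int (length xs)
     \<and> (fst (foldl (pasc_step1 ths) (ths/2, 0) xs) \<ge> ths \<longrightarrow> k \<ge> 1)
     \<and> (fst (foldl (pasc_step1 ths) (ths/2, 0) xs) < 0 \<longrightarrow> k + 1 \<le> int (length xs))"
proof (induction xs rule: rev_induct)
  case Nil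
  then show ?case using assms by (intro exI[of _ 0]) auto
next
  case (snoc x xs)
  then obtain k where k: "snd (foldl (pasc_step1 ths) (ths/2, 0) xs) = of_int k * ths"
     "fst (foldl (pasc_step1 ths) (ths/2, 0) xs) + snd (foldl (pasc_step1 ths) (ths/2, 0) xs)
        = ths/2 + sum_list xs"
     "0 \<le> k" "k \<le> int (length xs)" by blast
  obtain m s where ms: "foldl (pasc_step1 ths) (ths/2, 0) xs = (m, s)" by (cases "foldl (pasc_step1 ths) (ths/2, 0) xs")
  have fe: "foldl (pasc_step1 ths) (ths/2, 0) (xs @ [x]) = pasc_step1 ths (m, s) x"
    using ms by simp
  have kk: "s = of_int k * ths" "m + s = ths/2 + sum_list xs" using k(1,2) ms by auto
  show ?case
  proof (cases "m + x \<ge> ths")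
    case True
    then show ?thesis using kk k(3,4) assms
      by (intro exI[of _ "k+1"]) (simp only: fe, simp add: pasc_step1_def Let_def algebra_simps)
  next
    case False
    then show ?thesis using kk k(3,4) assms
      by (intro exI[of _ "k"]) (simp only: fe, simp add: pasc_step1_def Let_def algebra_simps)
  qed
qed

lemma stage2_iter:
  fixes ths :: real
  assumes "ths > 0"
  shows "(pasc_step2 ths ^^ n) (m, of_int k * ths) =
     (let d = \<lfloor>m / ths\<rfloor>; k' = k + (if d \<ge> 0 then min d (int n) else - min (-d) (int n))
      in (m - of_int (k' - k) * ths, of_int k' * ths))"
proof (induction n arbitrary: m k)
  case 0
  then show ?case by (simp add: Let_def)
next
  case (Suc n)
  have fl: "\<lfloor>m / ths\<rfloor> \<ge> 1 \<longleftrightarrow> m \<ge> ths" "\<lfloor>m / ths\<rfloor> < 0 \<longleftrightarrow> m < 0"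
    using assms by (auto simp: le_floor_iff floor_less_iff le_divide_eq divide_less_eq)
  show ?case
  proof (cases "m \<ge> ths")
    case True
    have e: "pasc_step2 ths (m, of_int k * ths) = (m - ths, of_int (k+1) * ths)"
      using True by (simp add: pasc_step2_def algebra_simps)
    have f: "\<lfloor>(m - ths) / ths\<rfloor> = \<lfloor>m / ths\<rfloor> - 1"
      using assms by (simp add: diff_divide_distrib)
    show ?thesis using True fl
      by (simp only: funpow_Suc_right o_apply e Suc f) (auto simp add: Let_def algebra_simps min_def)
  next
    case False
    note F = False
    show ?thesis
    proof (cases "m < 0")
      case True
      have e: "pasc_step2 ths (m, of_int k * ths) = (m + ths, of_int (k - 1) * ths)"
        using True F by (simp add: pasc_step2_def algebra_simps)
      have f: "\<lfloor>(m + ths) / ths\<rfloor> = \<lfloor>m / ths\<rfloor> + 1"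
        using assms by (simp add: add_divide_distrib)
      have "\<lfloor>m / ths\<rfloor> < 0" using True fl by simp
      then have "1 + \<lfloor>m / ths\<rfloor> \<le> int n" by linarith
      then show ?thesis
        by (simp only: funpow_Suc_right o_apply e Suc f) (auto simp add: Let_def algebra_simps min_def)
    next
      case False
      have e: "pasc_step2 ths (m, of_int k * ths) = (m, of_int k * ths)"
        using False F by (simp add: pasc_step2_def)
      have d0: "\<lfloor>m / ths\<rfloor> = 0" using False F fl by linarith
      show ?thesis
        by (simp only: funpow_Suc_right o_apply e Suc d0) (simp add: Let_def)
    qed
  qed
qed

lemma mem_formula:
  fixes ths :: real
  assumes "ths > 0"
  shows "pasc_mem ths (of_int k * ths) t = of_int (k - min (int t) (max k 0)) * ths"
proof (induction t)
  case 0
  then show ?case by simp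
next
  case (Suc t)
  show ?case
  proof (cases "k - min (int t) (max k 0) \<ge> 1")
    case True
    then have "pasc_mem ths (of_int k * ths) t - ths \<ge> 0"
    proof -
      have "of_int (k - min (int t) (max k 0)) * ths \<ge> 1 * ths"
        using True assms by (intro mult_right_mono) auto
      then show ?thesis using Suc by simp
    qed
    then show ?thesis using Suc True
      by (simp add: heaviside_def algebra_simps)
  next
    case False
    have "of_int (k - min (int t) (max k 0)) * ths < 1 * ths"
      using False assms by (intro mult_strict_right_mono) auto
    then have "pasc_mem ths (of_int k * ths) t - ths < 0" using Suc by simp
    moreover have "k - min (int (Suc t)) (max k 0) = k - min (int t) (max k 0)" using False by auto
    ultimately show ?thesis using Suc by (simp add: heaviside_def)
  qed
qed

lemma out_formula:
  fixes ths :: real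
  assumes "ths > 0" "t \<ge> 1"
  shows "heaviside (pasc_mem ths (of_int k * ths) (t - 1) - ths) * ths = (if int t \<le> k then ths else 0)"
proof -
  have m: "pasc_mem ths (of_int k * ths) (t - 1) - ths = of_int (k - min (int (t-1)) (max k 0) - 1) * ths"
    using mem_formula[OF assms(1)] by (simp add: algebra_simps)
  have "k - min (int (t-1)) (max k 0) - 1 \<ge> 0 \<longleftrightarrow> int t \<le> k" using assms(2) by auto
  then show ?thesis unfolding m heaviside_def using assms(1)
    by (auto simp: zero_le_mult_iff)
qed

lemma sum_out:
  fixes ths :: real
  shows "(\<Sum>j=1..n. (if int j \<le> k then ths else 0)) = of_int (min (int n) (max k 0)) * ths"
proof (induction n)
  case 0
  then show ?case by simp
next
  case (Suc n)
  then show ?case by (auto simp: algebra_simps)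
qed

lemma entry_main:
  fixes \<theta> :: real and Lp Ln :: nat and X :: "nat \<Rightarrow> real"
  assumes "\<theta> > 0" and "Lp \<ge> 1" and "Ln \<ge> 1"
  shows "qcfs \<theta> Ln (\<Sum>i=1..Lp. X i) = (\<Sum>j=1..Ln. pasc_entry \<theta> Lp Ln X j)"
proof -
  define ths where "ths = \<theta> / real Ln"
  have ths: "ths > 0" using assms by (simp add: ths_def)
  define z where "z = (\<Sum>i=1..Lp. X i)"
  have zl: "sum_list (map X [1..<Lp + 1]) = z"
    unfolding z_def by (simp only: interv_sum_list_conv_sum_set_nat set_upt atLeastLessThanSuc_atLeastAtMost Suc_eq_plus1[symmetric])
  obtain m1 s1 where ms1: "pasc_stage1 ths Lp X = (m1, s1)" by (cases "pasc_stage1 ths Lp X")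
  have len: "length (map X [1..<Lp + 1]) = Lp" by simp
  note st = stage1_inv[OF ths, of "map X [1..<Lp + 1]", unfolded len zl
     pasc_stage1_def[symmetric] ms1 fst_conv snd_conv]
  from st obtain k1 where k1: "s1 = of_int k1 * ths" "m1 + s1 = ths/2 + z" "0 \<le> k1" "k1 \<le> int Lp"
     "m1 \<ge> ths \<longrightarrow> k1 \<ge> 1" "m1 < 0 \<longrightarrow> k1 + 1 \<le> int Lp"
    by blast
  define d where "d = \<lfloor>m1 / ths\<rfloor>"
  define N where "N = max Lp Ln - 1"
  define k2 where "k2 = k1 + (if d \<ge> 0 then min d (int N) else - min (-d) (int N))"
  have s2: "snd (pasc_stage2 ths Lp Ln X) = of_int k2 * ths"
    unfolding pasc_stage2_def ms1 k1(1) stage2_iter[OF ths] k2_def d_def N_def by (simp add: Let_def)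
  have fl: "d \<ge> 1 \<longleftrightarrow> m1 \<ge> ths" "d < 0 \<longleftrightarrow> m1 < 0"
    using ths by (auto simp: d_def le_floor_iff floor_less_iff le_divide_eq divide_less_eq)
  have K: "\<lfloor>z * real Ln / \<theta> + 1/2\<rfloor> = k1 + d"
  proof -
    have "z * real Ln / \<theta> + 1/2 = m1 / ths + of_int k1"
    proof -
      have a: "z * real Ln / \<theta> = z / ths" using assms by (simp add: ths_def)
      have b: "z = m1 + of_int k1 * ths - ths/2" using k1 by simp
      have "z / ths + 1/2 = m1 / ths + of_int k1" unfolding b using ths by (simp add: field_simps)
      then show ?thesis using a by simp
    qed
    then show ?thesis by (simp add: d_def)
  qed
  have rhs: "(\<Sum>j=1..Ln. pasc_entry \<theta> Lp Ln X j) = of_int (min (int Ln) (max k2 0)) * ths"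
  proof -
    have "(\<Sum>j=1..Ln. pasc_entry \<theta> Lp Ln X j) = (\<Sum>j=1..Ln. (if int j \<le> k2 then ths else 0))"
    proof (rule sum.cong)
      fix j assume "j \<in> {1..Ln}"
      then have "j \<ge> 1" by simp
      show "pasc_entry \<theta> Lp Ln X j = (if int j \<le> k2 then ths else 0)"
        unfolding pasc_entry_def Let_def ths_def[symmetric] s2 out_formula[OF ths \<open>j \<ge> 1\<close>] ..
    qed simp
    then show ?thesis using sum_out[where n=Ln and k=k2 and ths=ths] by simp
  qed
  have lhs: "qcfs \<theta> Ln z = of_int (min (int Ln) (max (k1 + d) 0)) * ths"
  proof -
    have "clip01 (of_int (k1 + d) / real Ln) = of_int (min (int Ln) (max (k1 + d) 0)) / real Ln"
      using assms(3) by (auto simp: clip01_def min_def max_def field_simps)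
    then show ?thesis unfolding qcfs_def K ths_def by simp
  qed
  have "min (int Ln) (max k2 0) = min (int Ln) (max (k1 + d) 0)"
    using k1(3-6) fl assms(2,3) unfolding k2_def N_def by (auto simp: min_def max_def)
  then show ?thesis using lhs rhs z_def by simp
qed

theorem theorem2:
  fixes \<theta> :: real and Lp Ln :: nat
    and z :: "'e \<Rightarrow> real" and X :: "nat \<Rightarrow> 'e \<Rightarrow> real"
  assumes "\<theta> > 0" and "Lp \<ge> 1" and "Ln \<ge> 1"
    and "\<And>e. (\<Sum>i=1..Lp. X i e) = z e"
  shows "(\<forall>e. qcfs \<theta> Ln (z e) = (\<Sum>j=1..Ln. pasc \<theta> Lp Ln X j e))
       \<and> (\<forall>j\<in>{1..Ln}. \<forall>e. pasc \<theta> Lp Ln X j e \<in> {0, \<theta> / real Ln})"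
proof
  show "\<forall>e. qcfs \<theta> Ln (z e) = (\<Sum>j=1..Ln. pasc \<theta> Lp Ln X j e)"
    using entry_main[OF assms(1-3)] assms(4) unfolding pasc_def by metis
  show "\<forall>j\<in>{1..Ln}. \<forall>e. pasc \<theta> Lp Ln X j e \<in> {0, \<theta> / real Ln}"
    by (simp add: pasc_def pasc_entry_def Let_def heaviside_def)
qed

end
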